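(* Let $0\le\delta<1$, $\beta\in(0,1-\delta)$, and $w_1,\dots,w_\ell\in\mathbb{R}^n$ with $\ell=\delta n$. Consider the semidefinite program: minimize $\sum_{i=1}^n q_i$ over $\eta\in\mathbb{R}^\ell$, $q\in\mathbb{R}^n$ with $q\ge0$, and $n\times n$ positive semidefinite $G$, subject to \[ \sum_{k=1}^\ell\eta_k w_kw_k^T+G-\frac1\beta\mathrm{diag}(G)+\sum_{i=1}^n q_ie_ie_i^T\succeq I. \] Then every feasible solution has objective value at least $(1-\delta-\beta)n$; in particular its optimum value is at least $(1-\delta-\beta)n$.
   Context: $e_i$ is the $i$-th standard basis vector, $I$ the identity, $\mathrm{diag}(G)$ the diagonal part of $G$, and $\succeq$ the positive semidefinite order. *)

theory Defs
  imports "HOL-Analysis.Analysis"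
begin

definition psd :: "real^'n^'n \<Rightarrow> bool" where
  "psd M \<longleftrightarrow> transpose M = M \<and> (\<forall>x. 0 \<le> x \<bullet> (M *v x))"

definition loewner_ge :: "real^'n^'n \<Rightarrow> real^'n^'n \<Rightarrow> bool" where
  "loewner_ge A B \<longleftrightarrow> psd (A - B)"

definition outer :: "real^'n \<Rightarrow> real^'n^'n" where
  "outer w = (\<chi> i j. w $ i * w $ j)"

definition diag_part :: "real^'n^'n \<Rightarrow> real^'n^'n" where
  "diag_part G = (\<chi> i j. if i = j then G $ i $ j else 0)"

definition e_vec :: "'n::finite \<Rightarrow> real^'n" where
  "e_vec i = (\<chi> j. if j = i then 1 else 0)"

end

theory Submission
  imports Defs
begin

definition qf :: "real^'n^'n \<Rightarrow> real^'n \<Rightarrow> real" where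
  "qf A x = x \<bullet> (A *v x)"

lemma qf_expand: "qf A x = (\<Sum>i\<in>UNIV. \<Sum>j\<in>UNIV. A$i$j * x$i * x$j)"
  unfolding qf_def inner_vec_def matrix_vector_mult_def
  by (simp add: sum_distrib_left mult_ac)

lemma qf_add: "qf (A + B) x = qf A x + qf B x"
  by (simp add: qf_def matrix_vector_mult_add_rdistrib inner_add_right)
lemma qf_diff: "qf (A - B) x = qf A x - qf B x"
  by (simp add: qf_def matrix_vector_mult_diff_rdistrib inner_diff_right)
lemma qf_scale: "qf (c *\<^sub>R A) x = c * qf A x"
  by (simp add: qf_expand sum_distrib_left mult_ac)
lemma qf_sum: "finite S \<Longrightarrow> qf (\<Sum>k\<in>S. A k) x = (\<Sum>k\<in>S. qf (A k) x)"
  by (induction S rule: finite_induct) (simp_all add: qf_add, simp add: qf_def)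
lemma qf_outer: "qf (outer w) x = (w \<bullet> x)^2"
  by (simp add: qf_expand outer_def inner_vec_def power2_eq_square sum_distrib_left sum_distrib_right mult_ac)
lemma qf_diag: "qf (diag_part G) x = (\<Sum>i\<in>UNIV. G$i$i * (x$i)^2)"
proof -
  have "qf (diag_part G) x = (\<Sum>i\<in>UNIV. \<Sum>j\<in>UNIV. if j = i then G$i$i * x$i * x$i else 0)"
    unfolding qf_expand diag_part_def by (intro sum.cong refl) auto
  then show ?thesis by (simp add: power2_eq_square mult_ac)
qed
lemma e_vec_inner: "e_vec i \<bullet> x = x $ i"
proof -
  have "e_vec i \<bullet> x = (\<Sum>j\<in>UNIV. if j = i then x$i else 0)"
    unfolding e_vec_def inner_vec_def by (intro sum.cong refl) auto
  then show ?thesis by simp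
qed
lemma qf_mat1: "qf (mat 1) x = x \<bullet> x"
  by (simp add: qf_def)

lemma orthonormal_extend:
  fixes B0 :: "(real^'n) set"
  assumes orth0: "pairwise orthogonal B0" and n0: "\<And>b. b \<in> B0 \<Longrightarrow> norm b = 1"
  obtains B where "B0 \<subseteq> B" "pairwise orthogonal B" "\<And>b. b \<in> B \<Longrightarrow> norm b = 1"
    "span B = UNIV" "finite B"
proof -
  define S' where "S' = {y::real^'n. \<forall>x\<in>B0. orthogonal x y}"
  have subS: "subspace S'" unfolding S'_def by (rule subspace_orthogonal_to_vectors)
  obtain B1 where B1: "B1 \<subseteq> S'" "pairwise orthogonal B1" "\<And>x. x\<in>B1 \<Longrightarrow> norm x = 1"
    "independent B1" "card B1 = dim S'" "span B1 = S'"
    using orthonormal_basis_subspace[OF subS] by blast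
  have fin0: "finite B0" using orth0 by (rule pairwise_orthogonal_imp_finite)
  have ip0: "x \<bullet> b = (if x = b then 1 else 0)" if "x \<in> B0" "b \<in> B0" for x b
  proof (cases "x = b")
    case True then show ?thesis using n0[OF that(1)] by (simp add: norm_eq_1)
  next
    case False then show ?thesis using orth0 that unfolding pairwise_def orthogonal_def by simp
  qed
  let ?B = "B0 \<union> B1"
  have cross: "orthogonal x y" if "x \<in> B0" "y \<in> B1" for x y
    using that B1(1) unfolding S'_def by blast
  have po: "pairwise orthogonal ?B"
    unfolding pairwise_def
  proof (intro ballI impI)
    fix x y assume xy: "x \<in> ?B" "y \<in> ?B" "x \<noteq> y"
    show "orthogonal x y"
    proof (cases "x \<in> B0")
      case True
      show ?thesis
      proof (cases "y \<in> B0")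
        case True then show ?thesis using \<open>x \<in> B0\<close> xy(3) orth0 unfolding pairwise_def by blast
      next
        case False then show ?thesis using \<open>x \<in> B0\<close> xy(2) cross by blast
      qed
    next
      case False
      then have x1: "x \<in> B1" using xy(1) by blast
      show ?thesis
      proof (cases "y \<in> B0")
        case True then show ?thesis using x1 cross orthogonal_commute by blast
      next
        case False then have "y \<in> B1" using xy(2) by blast
        then show ?thesis using x1 xy(3) B1(2) unfolding pairwise_def by blast
      qed
    qed
  qed
  have sp: "span ?B = UNIV"
  proof -
    { fix v :: "real^'n"
      define p where "p = (\<Sum>b\<in>B0. (v \<bullet> b) *\<^sub>R b)"
      have "v - p \<in> S'"
        unfolding S'_def orthogonal_def
      proof (intro CollectI ballI)
        fix x assume x: "x \<in> B0"
        have "x \<bullet> p = (\<Sum>b\<in>B0. (v \<bullet> b) * (x \<bullet> b))"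
          unfolding p_def by (simp add: inner_sum_right)
        also have "\<dots> = (\<Sum>b\<in>B0. if b = x then v \<bullet> x else 0)"
          by (intro sum.cong refl) (simp add: ip0 x)
        also have "\<dots> = v \<bullet> x" using fin0 x by simp
        finally show "x \<bullet> (v - p) = 0" by (simp add: inner_diff_right inner_commute)
      qed
      then have "v - p \<in> span ?B" using B1(6) span_mono[of B1 ?B] by blast
      moreover have "p \<in> span ?B" unfolding p_def
        by (intro span_sum span_mul span_base) simp
      ultimately have "v \<in> span ?B"
        by (metis diff_add_cancel span_add_eq2)
    }
    then show ?thesis by blast
  qed
  have nB: "norm b = 1" if "b \<in> ?B" for b using that B1(3) n0 by blast
  have finB: "finite ?B" using po by (rule pairwise_orthogonal_imp_finite)
  show ?thesis by (rule that[of ?B, OF _ po nB sp finB]) simp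
qed

lemma parseval:
  fixes B :: "(real^'n) set"
  assumes "pairwise orthogonal B" "\<And>b. b \<in> B \<Longrightarrow> norm b = 1" "span B = UNIV" "finite B"
  shows "(\<Sum>b\<in>B. b$i * b$k) = (if i = k then 1 else 0)"
proof -
  have "e_vec k = (\<Sum>b\<in>B. (e_vec k \<bullet> b) *\<^sub>R b)"
    using orthonormal_basis_expand[OF assms(1,2) _ assms(4)] assms(3) by simp
  then have "e_vec i \<bullet> e_vec k = e_vec i \<bullet> (\<Sum>b\<in>B. (e_vec k \<bullet> b) *\<^sub>R b)" by simp
  also have "\<dots> = (\<Sum>b\<in>B. b$i * b$k)"
    by (simp add: inner_sum_right e_vec_inner inner_commute[of "e_vec k"] mult_ac)
  finally have h: "e_vec i \<bullet> e_vec k = (\<Sum>b\<in>B. b$i * b$k)" .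
  have "e_vec i \<bullet> e_vec k = (if i = k then 1 else 0)"
    by (simp add: e_vec_inner, simp add: e_vec_def)
  with h show ?thesis by simp
qed

lemma bessel_coord:
  fixes B0 :: "(real^'n) set"
  assumes "pairwise orthogonal B0" "\<And>b. b \<in> B0 \<Longrightarrow> norm b = 1"
  shows "(\<Sum>b\<in>B0. (b$i)^2) \<le> 1"
proof -
  obtain B where B: "B0 \<subseteq> B" "pairwise orthogonal B" "\<And>b. b \<in> B \<Longrightarrow> norm b = 1"
    "span B = UNIV" "finite B" using orthonormal_extend[OF assms] by metis
  have "(\<Sum>b\<in>B0. (b$i)^2) \<le> (\<Sum>b\<in>B. (b$i)^2)"
    by (rule sum_mono2[OF B(5) B(1)]) auto
  also have "\<dots> = 1" using parseval[OF B(2-5), of i i] by (simp add: power2_eq_square)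
  finally show ?thesis .
qed

lemma trace_bound:
  fixes B0 :: "(real^'n) set" and C :: "real^'n^'n"
  assumes "pairwise orthogonal B0" "\<And>b. b \<in> B0 \<Longrightarrow> norm b = 1"
    and psdC: "\<And>z. 0 \<le> qf C z"
  shows "(\<Sum>b\<in>B0. qf C b) \<le> (\<Sum>i\<in>UNIV. C$i$i)"
proof -
  obtain B where B: "B0 \<subseteq> B" "pairwise orthogonal B" "\<And>b. b \<in> B \<Longrightarrow> norm b = 1"
    "span B = UNIV" "finite B" using orthonormal_extend[OF assms(1,2)] by metis
  have "(\<Sum>b\<in>B0. qf C b) \<le> (\<Sum>b\<in>B. qf C b)"
    by (rule sum_mono2[OF B(5) B(1)]) (use psdC in auto)
  also have "\<dots> = (\<Sum>b\<in>B. \<Sum>i\<in>UNIV. \<Sum>j\<in>UNIV. C$i$j * (b$i * b$j))"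
    unfolding qf_expand by (simp only: mult.assoc)
  also have "\<dots> = (\<Sum>i\<in>UNIV. \<Sum>b\<in>B. \<Sum>j\<in>UNIV. C$i$j * (b$i * b$j))"
    by (rule sum.swap)
  also have "\<dots> = (\<Sum>i\<in>UNIV. \<Sum>j\<in>UNIV. \<Sum>b\<in>B. C$i$j * (b$i * b$j))"
    by (intro sum.cong refl, rule sum.swap)
  also have "\<dots> = (\<Sum>i\<in>UNIV. \<Sum>j\<in>UNIV. C$i$j * (\<Sum>b\<in>B. b$i * b$j))"
    by (simp only: sum_distrib_left)
  also have "\<dots> = (\<Sum>i\<in>UNIV. \<Sum>j\<in>UNIV. if j = i then C$i$i else 0)"
    by (intro sum.cong refl) (auto simp: parseval[OF B(2-5)])
  also have "\<dots> = (\<Sum>i\<in>UNIV. C$i$i)" by simp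
  finally show ?thesis .
qed

lemma symm_inner: "transpose A = A \<Longrightarrow> x \<bullet> (A *v y) = (A *v x) \<bullet> (y::real^'n)"
  by (metis dot_lmul_matrix transpose_matrix_vector)

lemma qf_add_vec: "qf A (x + y) = qf A x + x \<bullet> (A *v y) + y \<bullet> (A *v x) + qf A y"
  by (simp add: qf_def matrix_vector_right_distrib inner_add_left inner_add_right)

lemma qf_scale_vec: "qf A (c *\<^sub>R x) = c^2 * qf A x"
  by (simp add: qf_def matrix_vector_mult_scaleR power2_eq_square)

lemma inertia:
  fixes A :: "real^'n^'n"
  assumes sym: "transpose A = A"
  obtains W where "subspace W" "\<And>x. x \<in> W \<Longrightarrow> x \<noteq> 0 \<Longrightarrow> 0 < qf A x"
     "\<And>z. (\<And>y. y \<in> W \<Longrightarrow> z \<bullet> (A *v y) = 0) \<Longrightarrow> qf A z \<le> 0"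
proof -
  define K where "K = {k. \<exists>W::(real^'n) set. subspace W \<and> dim W = k \<and> (\<forall>x\<in>W. x \<noteq> 0 \<longrightarrow> 0 < qf A x)}"
  have "0 \<in> K" unfolding K_def
    by (rule CollectI, rule exI[of _ "span {}"]) auto
  have "K \<subseteq> {..CARD('n)}" unfolding K_def using dim_subset_UNIV_cart by auto
  then have finK: "finite K" using finite_subset by blast
  define r where "r = Max K"
  have "r \<in> K" unfolding r_def using finK \<open>0 \<in> K\<close> by (intro Max_in) auto
  then obtain W where W: "subspace W" "dim W = r" "\<And>x. x\<in>W \<Longrightarrow> x \<noteq> 0 \<Longrightarrow> 0 < qf A x"
    unfolding K_def by blast
  show ?thesis
  proof (rule that[OF W(1) W(3)])
    fix z assume orth: "\<And>y. y \<in> W \<Longrightarrow> z \<bullet> (A *v y) = 0"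
    show "qf A z \<le> 0"
    proof (rule ccontr)
      assume "\<not> qf A z \<le> 0"
      then have pos: "0 < qf A z" by simp
      have zW: "z \<notin> W"
      proof
        assume "z \<in> W" then have "qf A z = 0" using orth by (simp add: qf_def)
        with pos show False by simp
      qed
      define W' where "W' = span (insert z W)"
      have "dim W' = r + 1"
      proof -
        have zs: "z \<notin> span W" using zW W(1) span_eq_iff by metis
        show ?thesis unfolding W'_def using zs W(2) by (simp add: dim_insert)
      qed
      moreover have "\<forall>x\<in>W'. x \<noteq> 0 \<longrightarrow> 0 < qf A x"
      proof (intro ballI impI)
        fix x assume x: "x \<in> W'" "x \<noteq> 0"
        then obtain k where k: "x - k *\<^sub>R z \<in> span W"
          unfolding W'_def span_insert by auto
        define y where "y = x - k *\<^sub>R z"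
        have yW: "y \<in> W" using k W(1) unfolding y_def by (metis span_eq_iff)
        have xe: "x = y + k *\<^sub>R z" unfolding y_def by simp
        have c1: "(k *\<^sub>R z) \<bullet> (A *v y) = 0" using orth[OF yW] by simp
        have c2: "y \<bullet> (A *v (k *\<^sub>R z)) = 0"
          using orth[OF yW] symm_inner[OF sym, of y "k *\<^sub>R z"]
          by (simp add: matrix_vector_mult_scaleR inner_commute)
        have q: "qf A x = qf A y + k^2 * qf A z"
          unfolding xe qf_add_vec qf_scale_vec using c1 c2 by simp
        show "0 < qf A x"
        proof (cases "y = 0")
          case True
          then have "k \<noteq> 0" using x(2) xe by auto
          then show ?thesis using q pos True by (simp add: qf_def)
        next
          case False
          then have "0 < qf A y" using W(3) yW by blast
          then show ?thesis using q pos by (simp add: add_pos_nonneg)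
        qed
      qed
      ultimately have "r + 1 \<in> K" unfolding K_def W'_def by blast
      then have "r + 1 \<le> r" unfolding r_def using finK by simp
      then show False by simp
    qed
  qed
qed


lemma qf_e: "qf A (e_vec i) = A$i$i"
proof -
  have "(A *v e_vec i) $ i = (\<Sum>j\<in>UNIV. if j = i then A$i$i else 0)"
    unfolding matrix_vector_mult_def e_vec_def by (simp only: vec_lambda_beta) (intro sum.cong refl, simp)
  then show ?thesis by (simp add: qf_def e_vec_inner)
qed

lemma e_A_e: "e_vec i \<bullet> (A *v e_vec j) = A$i$j"
proof -
  have "(A *v e_vec j) $ i = (\<Sum>k\<in>UNIV. if k = j then A$i$j else 0)"
    unfolding matrix_vector_mult_def e_vec_def by (simp only: vec_lambda_beta) (intro sum.cong refl, simp)
  then show ?thesis by (simp add: e_vec_inner)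
qed

lemma psd_zero_diag:
  fixes G :: "real^'n^'n"
  assumes sym: "transpose G = G" and psd: "\<And>x. 0 \<le> qf G x" and z: "G$a$a = 0"
  shows "G$a$c = 0"
proof (cases "a = c")
  case True then show ?thesis using z by simp
next
  case False
  have gca: "G$c$a = G$a$c" using sym by (metis transpose_def vec_lambda_beta)
  have key: "0 \<le> 2 * t * G$a$c + G$c$c" for t
  proof -
    have "qf G (t *\<^sub>R e_vec a + e_vec c) = t^2 * G$a$a + t * G$a$c + t * G$c$a + G$c$c"
      unfolding qf_add_vec qf_scale_vec qf_e
      by (simp add: matrix_vector_mult_scaleR e_A_e)
    then show ?thesis using psd[of "t *\<^sub>R e_vec a + e_vec c"] z gca by simp
  qed
  show ?thesis
  proof (rule ccontr)
    assume ne: "G$a$c \<noteq> 0"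
    have "0 \<le> 2 * (- (G$c$c + 1) / (2 * G$a$c)) * G$a$c + G$c$c" by (rule key)
    also have "\<dots> = -1" using ne by (simp add: field_simps)
    finally show False by simp
  qed
qed

lemma div_ident: "(x::real) / (p * q) * z * w = x * (z / p) * (w / q)"
  by (cases "p = 0"; cases "q = 0") (simp_all add: field_simps)

theorem theorem14:
  fixes \<delta> \<beta> :: real and l :: nat
    and w :: "nat \<Rightarrow> real^'n"
    and \<eta> :: "nat \<Rightarrow> real" and q :: "real^'n" and G :: "real^'n^'n"
  assumes "0 \<le> \<delta>" and "\<delta> < 1"
    and "0 < \<beta>" and "\<beta> < 1 - \<delta>"
    and "real l = \<delta> * real CARD('n)"
    and "\<forall>i. 0 \<le> q $ i"
    and "psd G"
    and "loewner_ge
           ((\<Sum>k<l. \<eta> k *\<^sub>R outer (w k)) + G - (1 / \<beta>) *\<^sub>R diag_part G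
            + (\<Sum>i\<in>UNIV. q $ i *\<^sub>R outer (e_vec i)))
           (mat 1)"
  shows "(\<Sum>i\<in>UNIV. q $ i) \<ge> (1 - \<delta> - \<beta>) * real CARD('n)"
proof -
  note bpos = assms(3)
  have Gsym: "transpose G = G" and Gpsd: "\<And>x. 0 \<le> qf G x"
    using assms(7) unfolding psd_def qf_def by auto
  have Gd: "0 \<le> G$i$i" for i using Gpsd[of "e_vec i"] by (simp add: qf_e)
  define d where "d i = sqrt (G$i$i)" for i
  have dd: "d i * d i = G$i$i" for i unfolding d_def using Gd by simp
  define C :: "real^'n^'n" where "C = (\<chi> a c. G$a$c / (d a * d c))"
  define A' where "A' = C - (1/\<beta>) *\<^sub>R mat 1"
  have Csym: "transpose C = C"
    unfolding C_def transpose_def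
    by (simp add: vec_eq_iff mult.commute, metis Gsym transpose_def vec_lambda_beta)
  have A'sym: "transpose A' = A'"
    unfolding A'_def using Csym by (simp add: vec_eq_iff transpose_def mat_def)
  have qfA': "qf A' z = qf C z - (1/\<beta>) * (z \<bullet> z)" for z
    unfolding A'_def by (simp add: qf_diff qf_scale qf_mat1)
  have Cpsd: "0 \<le> qf C z" for z
  proof -
    have "qf C z = qf G (\<chi> a. z$a / d a)"
      unfolding qf_expand C_def by (simp add: div_ident)
    then show ?thesis using Gpsd by simp
  qed
  have trC: "(\<Sum>i\<in>UNIV. C$i$i) \<le> real CARD('n)"
  proof -
    have "(\<Sum>i\<in>UNIV. C$i$i) \<le> (\<Sum>i\<in>(UNIV::'n set). 1)"
      by (rule sum_mono) (simp add: C_def dd)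
    then show ?thesis by simp
  qed
  obtain W where W: "subspace W" "\<And>x. x \<in> W \<Longrightarrow> x \<noteq> 0 \<Longrightarrow> 0 < qf A' x"
     "\<And>z. (\<And>y. y \<in> W \<Longrightarrow> z \<bullet> (A' *v y) = 0) \<Longrightarrow> qf A' z \<le> 0"
    using inertia[OF A'sym] by metis
  obtain BW where BW: "BW \<subseteq> W" "pairwise orthogonal BW" "\<And>x. x \<in> BW \<Longrightarrow> norm x = 1"
    "card BW = dim W" "span BW = W"
    using orthonormal_basis_subspace[OF W(1)] by metis
  have finBW: "finite BW" using BW(2) pairwise_orthogonal_imp_finite by blast
  have rbound: "real (card BW) \<le> \<beta> * real CARD('n)"
  proof -
    have gt: "1/\<beta> \<le> qf C b" if "b \<in> BW" for b
    proof -
      have "b \<noteq> 0" "b \<bullet> b = 1" using BW(3)[OF that] by (auto simp: norm_eq_1)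
      then have "0 < qf A' b" using W(2) BW(1) that by blast
      then show ?thesis using qfA' \<open>b \<bullet> b = 1\<close> by simp
    qed
    have "real (card BW) * (1/\<beta>) = (\<Sum>b\<in>BW. 1/\<beta>)" by simp
    also have "\<dots> \<le> (\<Sum>b\<in>BW. qf C b)" by (rule sum_mono) (use gt in auto)
    also have "\<dots> \<le> (\<Sum>i\<in>UNIV. C$i$i)" by (rule trace_bound[OF BW(2,3) Cpsd])
    also have "\<dots> \<le> real CARD('n)" by (rule trC)
    finally have "real (card BW) / \<beta> \<le> real CARD('n)" by simp
    then show ?thesis using bpos by (simp add: divide_le_eq mult.commute)
  qed
  define phi :: "real^'n \<Rightarrow> real^'n" where "phi x = (\<chi> a. d a * x$a)" for x
  have phi_adj: "phi x \<bullet> v = x \<bullet> phi v" for x v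
    unfolding phi_def inner_vec_def by (simp add: mult_ac)
  have qfG_phi: "qf G x = qf C (phi x)" for x
  proof -
    have "G$a$c * x$a * x$c = C$a$c * (phi x)$a * (phi x)$c" for a c
    proof (cases "d a = 0 \<or> d c = 0")
      case True
      then have "G$a$a = 0 \<or> G$c$c = 0" unfolding d_def by auto
      then have "G$a$c = 0"
        using psd_zero_diag[OF Gsym Gpsd, of a c] psd_zero_diag[OF Gsym Gpsd, of c a]
        by (metis Gsym transpose_def vec_lambda_beta)
      then show ?thesis using True by (auto simp: C_def phi_def)
    next
      case False
      then show ?thesis by (simp add: C_def phi_def field_simps)
    qed
    then show ?thesis unfolding qf_expand by simp
  qed
  have phinorm: "phi x \<bullet> phi x = (\<Sum>a\<in>UNIV. G$a$a * (x$a)^2)" for x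
    unfolding phi_def inner_vec_def
    by (intro sum.cong refl) (simp add: power2_eq_square dd[symmetric] mult_ac)
  define F where "F = w ` {..<l} \<union> (\<lambda>b. phi (A' *v b)) ` BW"
  have finF: "finite F" unfolding F_def using finBW by simp
  have cardF: "card F \<le> l + card BW"
  proof -
    have "card F \<le> card (w ` {..<l}) + card ((\<lambda>b. phi (A' *v b)) ` BW)"
      unfolding F_def by (rule card_Un_le)
    also have "\<dots> \<le> l + card BW"
      by (intro add_mono) (auto intro: card_image_le[OF finBW] order.trans[OF card_image_le])
    finally show ?thesis .
  qed
  define U where "U = {y::real^'n. \<forall>a\<in>F. orthogonal a y}"
  have subU: "subspace U" unfolding U_def by (rule subspace_orthogonal_to_vectors)
  have Ueq: "{y \<in> UNIV. \<forall>x\<in>span F. orthogonal x y} = U"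
    unfolding U_def
  proof (intro equalityI subsetI)
    fix y assume "y \<in> {y \<in> UNIV. \<forall>x\<in>span F. orthogonal x y}"
    then show "y \<in> {y. \<forall>a\<in>F. orthogonal a y}" using span_base by blast
  next
    fix y assume y: "y \<in> {y. \<forall>a\<in>F. orthogonal a y}"
    have "orthogonal x y" if "x \<in> span F" for x
      using orthogonal_to_span[OF that, of y] y by (auto simp: orthogonal_commute)
    then show "y \<in> {y \<in> UNIV. \<forall>x\<in>span F. orthogonal x y}" by blast
  qed
  have "dim U + dim (span F) = dim (UNIV :: (real^'n) set)"
    using dim_subspace_orthogonal_to_vectors[of "span F" UNIV] Ueq by simp
  moreover have "dim (span F) \<le> card F"
    using dim_le_card[OF span_superset finF] by simp
  ultimately have dimU: "real CARD('n) \<le> real (dim U) + real l + real (card BW)"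
    using cardF by simp
  obtain BU where BU: "BU \<subseteq> U" "pairwise orthogonal BU" "\<And>x. x \<in> BU \<Longrightarrow> norm x = 1"
    "card BU = dim U"
    using orthonormal_basis_subspace[OF subU] by metis
  have finBU: "finite BU" using BU(2) pairwise_orthogonal_imp_finite by blast
  have loew: "0 \<le> qf ((\<Sum>k<l. \<eta> k *\<^sub>R outer (w k)) + G - (1 / \<beta>) *\<^sub>R diag_part G
            + (\<Sum>i\<in>UNIV. q $ i *\<^sub>R outer (e_vec i)) - mat 1) x" for x
    using assms(8) unfolding loewner_ge_def psd_def qf_def by blast
  have each: "1 \<le> (\<Sum>i\<in>UNIV. q$i * (u$i)^2)" if u: "u \<in> BU" for u
  proof -
    have uU: "u \<in> U" using u BU(1) by blast
    have uu: "u \<bullet> u = 1" using BU(3)[OF u] by (simp add: norm_eq_1)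
    have wu: "w k \<bullet> u = 0" if "k < l" for k
      using uU that unfolding U_def F_def orthogonal_def by blast
    have "qf A' (phi u) \<le> 0"
    proof (rule W(3))
      fix y assume y: "y \<in> W"
      have "orthogonal (A' *v phi u) b" if b: "b \<in> BW" for b
      proof -
        have "orthogonal (phi (A' *v b)) u" using uU b unfolding U_def F_def by blast
        then have "(A' *v b) \<bullet> phi u = 0" by (simp add: orthogonal_def phi_adj inner_commute)
        then show ?thesis unfolding orthogonal_def
          using symm_inner[OF A'sym, of "phi u" b] by (simp add: inner_commute)
      qed
      then have "orthogonal (A' *v phi u) y"
        using orthogonal_to_span[of y BW "A' *v phi u"] y BW(5) by blast
      then show "phi u \<bullet> (A' *v y) = 0"
        using symm_inner[OF A'sym, of "phi u" y] by (simp add: orthogonal_def)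
    qed
    then have gq: "qf G u \<le> (1/\<beta>) * (\<Sum>a\<in>UNIV. G$a$a * (u$a)^2)"
      using qfA' qfG_phi phinorm by simp
    have "0 \<le> (\<Sum>k<l. \<eta> k * (w k \<bullet> u)^2) + qf G u - (1/\<beta>) * (\<Sum>a\<in>UNIV. G$a$a * (u$a)^2)
              + (\<Sum>i\<in>UNIV. q$i * (u$i)^2) - 1"
      using loew[of u]
      by (simp add: qf_add qf_diff qf_sum qf_scale qf_outer qf_diag qf_mat1 uu e_vec_inner)
    then show ?thesis using wu gq by simp
  qed
  have "real (dim U) = (\<Sum>u\<in>BU. 1)" using BU(4) by simp
  also have "\<dots> \<le> (\<Sum>u\<in>BU. \<Sum>i\<in>UNIV. q$i * (u$i)^2)" by (rule sum_mono) (use each in auto)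
  also have "\<dots> = (\<Sum>i\<in>UNIV. q$i * (\<Sum>u\<in>BU. (u$i)^2))"
    by (subst sum.swap, simp only: sum_distrib_left)
  also have "\<dots> \<le> (\<Sum>i\<in>UNIV. q$i * 1)"
    by (rule sum_mono, rule mult_left_mono) (use bessel_coord[OF BU(2,3)] assms(6) in auto)
  finally have "real (dim U) \<le> (\<Sum>i\<in>UNIV. q$i)" by simp
  then show ?thesis using dimU rbound assms(5) by (simp add: algebra_simps)
qed

end
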